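(* Let $M$ be a circulant $n\times n$ matrix over $\mathbb{Z}_4+u\mathbb{Z}_4$. Then the matrix $[I_n\,|\,M]$ generates a formally self-dual code over $\mathbb{Z}_4+u\mathbb{Z}_4$ (of length $2n$).
   Context: $\mathbb{Z}_4+u\mathbb{Z}_4$ is the commutative ring of characteristic $4$ with $u^2=0$. A linear code of length $N$ is a submodule of $(\mathbb{Z}_4+u\mathbb{Z}_4)^N$; its dual is taken with respect to the Euclidean inner product $\sum_i x_iy_i$ in the ring. The Lee weight on $\mathbb{Z}_4+u\mathbb{Z}_4$ is $w_L(a+ub)=w_L(b)+w_L(a+b)$, where the Lee weight on $\mathbb{Z}_4$ is $0,1,2,1$ for $0,1,2,3$, extended additively to vectors. A linear code is formally self-dual if it has the same Lee weight enumerator as its dual. A circulant matrix is one in which each row is the cyclic shift by one position to the right of the previous row. *)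

theory Defs
  imports Main "HOL-Library.Numeral_Type"
begin

text \<open>An element ZU a b represents a + u b with a, b in Z4.\<close>
datatype zu4 = ZU "4" "4"

fun zu_re :: "zu4 \<Rightarrow> 4" where "zu_re (ZU a b) = a"
fun zu_im :: "zu4 \<Rightarrow> 4" where "zu_im (ZU a b) = b"

lemma zu4_eq_iff: "x = y \<longleftrightarrow> zu_re x = zu_re y \<and> zu_im x = zu_im y"
  by (cases x; cases y) auto

instantiation zu4 :: comm_ring_1
begin
definition "0 = ZU 0 0"
definition "1 = ZU 1 0"
definition "x + y = ZU (zu_re x + zu_re y) (zu_im x + zu_im y)"
definition "x - y = ZU (zu_re x - zu_re y) (zu_im x - zu_im y)"
definition "- x = ZU (- zu_re x) (- zu_im x)"
definition "x * y = ZU (zu_re x * zu_re y) (zu_re x * zu_im y + zu_im x * zu_re y)"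
instance
  by standard (simp_all add: zu4_eq_iff zero_zu4_def one_zu4_def plus_zu4_def
      minus_zu4_def uminus_zu4_def times_zu4_def algebra_simps)
end

definition u_elt :: zu4 where "u_elt = ZU 0 1"

definition lee_z4 :: "4 \<Rightarrow> nat" where
  "lee_z4 x = (if x = 0 then 0 else if x = 2 then 2 else 1)"

definition lee_zu :: "zu4 \<Rightarrow> nat" where
  "lee_zu x = lee_z4 (zu_im x) + lee_z4 (zu_re x + zu_im x)"

text \<open>Vectors of length N are functions nat => zu4 vanishing outside {..<N}.\<close>
definition vecs :: "nat \<Rightarrow> (nat \<Rightarrow> zu4) set" where
  "vecs N = {v. \<forall>i\<ge>N. v i = 0}"

definition lee_weight :: "nat \<Rightarrow> (nat \<Rightarrow> zu4) \<Rightarrow> nat" where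
  "lee_weight N v = (\<Sum>i<N. lee_zu (v i))"

text \<open>Lee weight enumerator, represented by its coefficient sequence (weight distribution).\<close>
definition lee_weight_enum :: "nat \<Rightarrow> (nat \<Rightarrow> zu4) set \<Rightarrow> nat \<Rightarrow> nat" where
  "lee_weight_enum N C w = card {c \<in> C. lee_weight N c = w}"

definition inner :: "nat \<Rightarrow> (nat \<Rightarrow> zu4) \<Rightarrow> (nat \<Rightarrow> zu4) \<Rightarrow> zu4" where
  "inner N x y = (\<Sum>i<N. x i * y i)"

definition dual_code :: "nat \<Rightarrow> (nat \<Rightarrow> zu4) set \<Rightarrow> (nat \<Rightarrow> zu4) set" where
  "dual_code N C = {y \<in> vecs N. \<forall>x\<in>C. inner N x y = 0}"

definition linear_code :: "nat \<Rightarrow> (nat \<Rightarrow> zu4) set \<Rightarrow> bool" where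
  "linear_code N C \<longleftrightarrow> C \<subseteq> vecs N \<and> (\<lambda>i. 0) \<in> C \<and>
     (\<forall>x\<in>C. \<forall>y\<in>C. (\<lambda>i. x i + y i) \<in> C) \<and> (\<forall>r. \<forall>x\<in>C. (\<lambda>i. r * x i) \<in> C)"

definition formally_self_dual :: "nat \<Rightarrow> (nat \<Rightarrow> zu4) set \<Rightarrow> bool" where
  "formally_self_dual N C \<longleftrightarrow> linear_code N C \<and>
     lee_weight_enum N C = lee_weight_enum N (dual_code N C)"

definition generated_code :: "nat \<Rightarrow> nat \<Rightarrow> (nat \<Rightarrow> nat \<Rightarrow> zu4) \<Rightarrow> (nat \<Rightarrow> zu4) set" where
  "generated_code k N G =
     {v. \<exists>a::nat \<Rightarrow> zu4. v = (\<lambda>j. if j < N then (\<Sum>i<k. a i * G i j) else 0)}"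

definition circulant :: "nat \<Rightarrow> (nat \<Rightarrow> nat \<Rightarrow> zu4) \<Rightarrow> bool" where
  "circulant n M \<longleftrightarrow> (\<forall>i j. Suc i < n \<and> j < n \<longrightarrow> M (Suc i) ((j + 1) mod n) = M i j)"

definition id_aug :: "nat \<Rightarrow> (nat \<Rightarrow> nat \<Rightarrow> zu4) \<Rightarrow> nat \<Rightarrow> nat \<Rightarrow> zu4" where
  "id_aug n M i j = (if j < n then (if i = j then 1 else 0) else M i (j - n))"

end

theory Submission
  imports Defs
begin

lemma sum_split2:
  "(\<Sum>k<2*n. f k) = (\<Sum>k<n. f k) + (\<Sum>j<n. f (n+j::nat)::'a::comm_monoid_add)"
proof -
  have 1: "(\<Sum>k<2*n. f k) = sum f {0..<n} + sum f {n..<2*n}"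
    using sum.atLeastLessThan_concat[of 0 n "2*n" f] by (simp add: lessThan_atLeast0)
  have 2: "sum f {0+n..<n+n} = (\<Sum>j=0..<n. f (j+n))"
    by (rule sum.shift_bounds_nat_ivl)
  show ?thesis using 1 2 by (simp add: mult_2 lessThan_atLeast0 add.commute)
qed

lemma neg_2_4: "- (2::4) = 2" by simp

lemma lee_z4_neg: "lee_z4 (- z) = lee_z4 z"
proof -
  have a: "-z = 0 \<longleftrightarrow> z = 0" by (metis minus_zero verit_minus_simplify(4))
  have b: "-z = 2 \<longleftrightarrow> z = 2"
    using minus_minus[of z] by (metis (mono_tags) neg_2_4)
  show ?thesis unfolding lee_z4_def using a b by simp
qed

lemma lee_zu_neg: "lee_zu (- x) = lee_zu x"
proof -
  have h1: "zu_re (-x) + zu_im (-x) = - (zu_re x + zu_im x)"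
    by (simp add: uminus_zu4_def)
  have h2: "zu_im (-x) = - zu_im x" by (simp add: uminus_zu4_def)
  show ?thesis unfolding lee_zu_def h1 unfolding h2 lee_z4_neg ..
qed

lemma gen_eval:
  assumes "j < 2*n"
  shows "(\<Sum>i<n. a i * id_aug n M i j) = (if j < n then a j else \<Sum>i<n. a i * M i (j-n))"
proof (cases "j < n")
  case True
  have "(\<Sum>i<n. a i * id_aug n M i j) = (\<Sum>i<n. if i = j then a i else 0)"
    by (rule sum.cong) (auto simp: id_aug_def True)
  also have "\<dots> = a j" using True by (simp add: sum.delta)
  finally show ?thesis using True by simp
next
  case False
  then show ?thesis by (simp add: id_aug_def)
qed

lemma C_iff:
  "v \<in> generated_code n (2*n) (id_aug n M) \<longleftrightarrow>
     v \<in> vecs (2*n) \<and> (\<forall>j<n. v (n+j) = (\<Sum>i<n. v i * M i j))"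
proof
  assume "v \<in> generated_code n (2*n) (id_aug n M)"
  then obtain a where va: "v = (\<lambda>j. if j < 2*n then (\<Sum>i<n. a i * id_aug n M i j) else 0)"
    unfolding generated_code_def by blast
  have vk: "\<And>k. k < n \<Longrightarrow> v k = a k" using va gen_eval[of _ n a M] by simp
  have "v (n+j) = (\<Sum>i<n. v i * M i j)" if "j < n" for j
  proof -
    have "v (n+j) = (\<Sum>i<n. a i * M i j)" using va gen_eval[of "n+j" n a M] that by simp
    also have "\<dots> = (\<Sum>i<n. v i * M i j)" by (rule sum.cong) (auto simp: vk)
    finally show ?thesis .
  qed
  moreover have "v \<in> vecs (2*n)" using va by (simp add: vecs_def)
  ultimately show "v \<in> vecs (2*n) \<and> (\<forall>j<n. v (n+j) = (\<Sum>i<n. v i * M i j))" by blast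
next
  assume h: "v \<in> vecs (2*n) \<and> (\<forall>j<n. v (n+j) = (\<Sum>i<n. v i * M i j))"
  have "v = (\<lambda>j. if j < 2*n then (\<Sum>i<n. v i * id_aug n M i j) else 0)"
  proof
    fix j
    show "v j = (if j < 2*n then (\<Sum>i<n. v i * id_aug n M i j) else 0)"
    proof (cases "j < 2*n")
      case True
      show ?thesis
      proof (cases "j < n")
        case True
        then show ?thesis using gen_eval[of j n v M] by simp
      next
        case False
        then have "j = n + (j - n)" "j - n < n" using \<open>j < 2*n\<close> by auto
        then show ?thesis using gen_eval[of j n v M] h False \<open>j < 2*n\<close> by metis
      qed
    next
      case False
      then show ?thesis using h by (simp add: vecs_def)
    qed
  qed
  then show "v \<in> generated_code n (2*n) (id_aug n M)"
    unfolding generated_code_def by blast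
qed

lemma inner_gen:
  "inner (2*n) (\<lambda>j. if j < 2*n then \<Sum>i<n. a i * id_aug n M i j else 0) y
    = (\<Sum>i<n. a i * (y i + (\<Sum>j<n. M i j * y (n+j))))"
proof -
  have A: "(\<Sum>k<n. (if k < 2*n then \<Sum>i<n. a i * id_aug n M i k else 0) * y k) = (\<Sum>k<n. a k * y k)"
    by (rule sum.cong) (auto simp: gen_eval)
  have B: "(\<Sum>j<n. (if n+j < 2*n then \<Sum>i<n. a i * id_aug n M i (n+j) else 0) * y (n+j))
      = (\<Sum>j<n. (\<Sum>i<n. a i * M i j) * y (n+j))"
    by (rule sum.cong) (auto simp: gen_eval)
  have C: "(\<Sum>j<n. (\<Sum>i<n. a i * M i j) * y (n+j)) = (\<Sum>i<n. a i * (\<Sum>j<n. M i j * y (n+j)))"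
  proof -
    have "(\<Sum>i<n. a i * (\<Sum>j<n. M i j * y (n+j))) = (\<Sum>i<n. \<Sum>j<n. a i * M i j * y (n+j))"
      by (simp only: sum_distrib_left mult.assoc)
    also have "\<dots> = (\<Sum>j<n. \<Sum>i<n. a i * M i j * y (n+j))"
      by (rule sum.swap)
    also have "\<dots> = (\<Sum>j<n. (\<Sum>i<n. a i * M i j) * y (n+j))"
      by (simp only: sum_distrib_right)
    finally show ?thesis by (rule sym)
  qed
  show ?thesis unfolding inner_def sum_split2 A B C
    by (simp only: distrib_left sum.distrib)
qed

lemma dual_iff:
  "y \<in> dual_code (2*n) (generated_code n (2*n) (id_aug n M)) \<longleftrightarrow>
     y \<in> vecs (2*n) \<and> (\<forall>i<n. y i + (\<Sum>j<n. M i j * y (n+j)) = 0)"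
proof
  assume h: "y \<in> dual_code (2*n) (generated_code n (2*n) (id_aug n M))"
  have "y i + (\<Sum>j<n. M i j * y (n+j)) = 0" if "i < n" for i
  proof -
    define a :: "nat \<Rightarrow> zu4" where "a = (\<lambda>k. if k = i then 1 else 0)"
    have "(\<lambda>j. if j < 2*n then \<Sum>i<n. a i * id_aug n M i j else 0) \<in> generated_code n (2*n) (id_aug n M)"
      unfolding generated_code_def by blast
    then have "inner (2*n) (\<lambda>j. if j < 2*n then \<Sum>i<n. a i * id_aug n M i j else 0) y = 0"
      using h unfolding dual_code_def by blast
    then have "(\<Sum>k<n. a k * (y k + (\<Sum>j<n. M k j * y (n+j)))) = 0" by (simp add: inner_gen)
    moreover have "(\<Sum>k<n. a k * (y k + (\<Sum>j<n. M k j * y (n+j)))) = y i + (\<Sum>j<n. M i j * y (n+j))"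
    proof -
      have "(\<Sum>k<n. a k * (y k + (\<Sum>j<n. M k j * y (n+j))))
          = (\<Sum>k<n. if k = i then y k + (\<Sum>j<n. M k j * y (n+j)) else 0)"
        by (rule sum.cong) (auto simp: a_def)
      then show ?thesis using that by (simp add: sum.delta)
    qed
    ultimately show ?thesis by simp
  qed
  then show "y \<in> vecs (2*n) \<and> (\<forall>i<n. y i + (\<Sum>j<n. M i j * y (n+j)) = 0)"
    using h unfolding dual_code_def by blast
next
  assume h: "y \<in> vecs (2*n) \<and> (\<forall>i<n. y i + (\<Sum>j<n. M i j * y (n+j)) = 0)"
  show "y \<in> dual_code (2*n) (generated_code n (2*n) (id_aug n M))"
    unfolding dual_code_def
  proof (intro CollectI conjI ballI)
    show "y \<in> vecs (2*n)" using h by blast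
    fix x assume "x \<in> generated_code n (2*n) (id_aug n M)"
    then obtain a where xa: "x = (\<lambda>j. if j < 2*n then (\<Sum>i<n. a i * id_aug n M i j) else 0)"
      unfolding generated_code_def by blast
    show "inner (2*n) x y = 0" unfolding xa inner_gen using h by simp
  qed
qed

lemma circ_shift:
  assumes c: "circulant n M" and "i < n"
  shows "M i ((i+k) mod n) = M 0 (k mod n)"
  using assms(2)
proof (induction i)
  case 0 then show ?case by simp
next
  case (Suc i)
  have n0: "0 < n" using Suc by simp
  have "(Suc i + k) mod n = ((i+k) mod n + 1) mod n" by (simp add: mod_Suc_eq)
  then have "M (Suc i) ((Suc i + k) mod n) = M i ((i+k) mod n)"
    using c Suc.prems n0 unfolding circulant_def by simp
  then show ?case using Suc by simp
qed

lemma circ_form: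
  assumes c: "circulant n M" and "i < n" "j < n"
  shows "M i j = M 0 ((j+n-i) mod n)"
proof -
  have "(i + (j+n-i)) mod n = j" using assms by simp
  then show ?thesis using circ_shift[OF c \<open>i<n\<close>, of "j+n-i"] by simp
qed

definition sg :: "nat \<Rightarrow> nat \<Rightarrow> nat" where "sg n k = (if k = 0 then 0 else n - k)"

lemma sg_lt: "k < n \<Longrightarrow> sg n k < n" by (auto simp: sg_def)
lemma sg_sg: "k < n \<Longrightarrow> sg n (sg n k) = k" by (auto simp: sg_def)

lemma sum_sg: "(\<Sum>k<n. g (sg n k)) = (\<Sum>k<n. g k)"
  by (rule sum.reindex_bij_witness[where i="sg n" and j="sg n"]) (auto simp: sg_lt sg_sg)

lemma circ_sym:
  assumes c: "circulant n M" and "j < n" "k < n"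
  shows "M (sg n k) j = M (sg n j) k"
proof -
  have "(j + n - sg n k) mod n = (k + n - sg n j) mod n"
    using assms(2,3) by (auto simp: sg_def add.commute)
  then show ?thesis using circ_form[OF c] sg_lt assms(2,3) by metis
qed

definition phi :: "nat \<Rightarrow> (nat \<Rightarrow> zu4) \<Rightarrow> nat \<Rightarrow> zu4" where
  "phi n y = (\<lambda>k. if k < n then y (n + sg n k) else if k < 2*n then - y (sg n (k-n)) else 0)"

lemma phi_weight: "lee_weight (2*n) (phi n y) = lee_weight (2*n) y"
proof -
  have "lee_weight (2*n) (phi n y) = (\<Sum>k<n. lee_zu (y (n + sg n k))) + (\<Sum>j<n. lee_zu (y (sg n j)))"
    unfolding lee_weight_def sum_split2 by (simp add: phi_def lee_zu_neg)
  also have "\<dots> = (\<Sum>k<n. lee_zu (y (n + k))) + (\<Sum>j<n. lee_zu (y j))"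
    using sum_sg[of "\<lambda>k. lee_zu (y (n + k))" n] sum_sg[of "\<lambda>k. lee_zu (y k)" n] by simp
  also have "\<dots> = lee_weight (2*n) y" unfolding lee_weight_def sum_split2 by simp
  finally show ?thesis .
qed

lemma phi_inj: "inj_on (phi n) (vecs (2*n))"
proof (rule inj_onI)
  fix y z assume y: "y \<in> vecs (2*n)" and z: "z \<in> vecs (2*n)" and e: "phi n y = phi n z"
  show "y = z"
  proof
    fix k
    show "y k = z k"
    proof (cases "k < n")
      case True
      have "phi n y (n + sg n k) = phi n z (n + sg n k)" using e by simp
      then show ?thesis using True by (simp add: phi_def sg_lt sg_sg)
    next
      case False
      show ?thesis
      proof (cases "k < 2*n")
        case True
        have "phi n y (sg n (k-n)) = phi n z (sg n (k-n))" using e by simp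
        then show ?thesis using True False by (simp add: phi_def sg_lt sg_sg)
      next
        case False
        then show ?thesis using y z by (simp add: vecs_def)
      qed
    qed
  qed
qed

lemma phi_dual:
  assumes c: "circulant n M"
    and y: "y \<in> dual_code (2*n) (generated_code n (2*n) (id_aug n M))"
  shows "phi n y \<in> generated_code n (2*n) (id_aug n M)"
proof -
  have yv: "y \<in> vecs (2*n)" and yd: "\<And>i. i<n \<Longrightarrow> y i + (\<Sum>j<n. M i j * y (n+j)) = 0"
    using y dual_iff by blast+
  have "phi n y (n+j) = (\<Sum>i<n. phi n y i * M i j)" if j: "j < n" for j
  proof -
    have "phi n y (n+j) = - y (sg n j)" using j by (simp add: phi_def)
    also have "\<dots> = (\<Sum>l<n. M (sg n j) l * y (n+l))"
      using yd[OF sg_lt[OF j]] by (simp add: add_eq_0_iff)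
    also have "\<dots> = (\<Sum>l<n. M (sg n l) j * y (n+l))"
      by (rule sum.cong) (auto simp: circ_sym[OF c j])
    also have "\<dots> = (\<Sum>i<n. y (n + sg n i) * M i j)"
    proof -
      have "(\<Sum>i<n. y (n + sg n i) * M i j) = (\<Sum>l<n. y (n + sg n (sg n l)) * M (sg n l) j)"
        using sum_sg[of "\<lambda>i. y (n + sg n i) * M i j" n] by simp
      also have "\<dots> = (\<Sum>l<n. M (sg n l) j * y (n+l))"
        by (rule sum.cong) (auto simp: sg_sg mult.commute)
      finally show ?thesis by simp
    qed
    also have "\<dots> = (\<Sum>i<n. phi n y i * M i j)"
      by (rule sum.cong) (auto simp: phi_def)
    finally show ?thesis .
  qed
  moreover have "phi n y \<in> vecs (2*n)" by (simp add: vecs_def phi_def)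
  ultimately show ?thesis using C_iff by blast
qed

lemma phi_surj:
  assumes c: "circulant n M"
    and v: "v \<in> generated_code n (2*n) (id_aug n M)"
  shows "\<exists>y \<in> dual_code (2*n) (generated_code n (2*n) (id_aug n M)). v = phi n y"
proof -
  have vv: "v \<in> vecs (2*n)" and vc: "\<And>j. j<n \<Longrightarrow> v (n+j) = (\<Sum>i<n. v i * M i j)"
    using v C_iff by blast+
  define y where "y = (\<lambda>k. if k < n then - v (n + sg n k) else if k < 2*n then v (sg n (k-n)) else 0)"
  have "v = phi n y"
  proof
    fix k
    show "v k = phi n y k"
    proof (cases "k < n")
      case True then show ?thesis by (simp add: phi_def y_def sg_lt sg_sg)
    next
      case False
      then show ?thesis using vv by (auto simp: phi_def y_def sg_lt sg_sg vecs_def)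
    qed
  qed
  moreover have "y \<in> dual_code (2*n) (generated_code n (2*n) (id_aug n M))"
    unfolding dual_iff
  proof
    show "y \<in> vecs (2*n)" by (simp add: vecs_def y_def)
    show "\<forall>i<n. y i + (\<Sum>j<n. M i j * y (n+j)) = 0"
    proof (intro allI impI)
      fix i assume i: "i < n"
      have "(\<Sum>j<n. M i j * y (n+j)) = (\<Sum>j<n. M i j * v (sg n j))"
        by (rule sum.cong) (auto simp: y_def)
      also have "\<dots> = (\<Sum>l<n. M i (sg n l) * v l)"
      proof -
        have "(\<Sum>j<n. M i j * v (sg n j)) = (\<Sum>l<n. M i (sg n l) * v (sg n (sg n l)))"
          using sum_sg[of "\<lambda>j. M i j * v (sg n j)" n] by simp
        also have "\<dots> = (\<Sum>l<n. M i (sg n l) * v l)"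
          by (rule sum.cong) (auto simp: sg_sg)
        finally show ?thesis .
      qed
      also have "\<dots> = (\<Sum>l<n. v l * M l (sg n i))"
      proof (rule sum.cong)
        fix l assume "l \<in> {..<n}"
        then have l: "l < n" by simp
        have "M (sg n (sg n i)) (sg n l) = M (sg n (sg n l)) (sg n i)"
          using circ_sym[OF c sg_lt[OF l] sg_lt[OF i]] .
        then show "M i (sg n l) * v l = v l * M l (sg n i)"
          using i l by (simp add: sg_sg mult.commute)
      qed simp
      also have "\<dots> = v (n + sg n i)" using vc[OF sg_lt[OF i]] by simp
      finally show "y i + (\<Sum>j<n. M i j * y (n+j)) = 0" using i by (simp add: y_def)
    qed
  qed
  ultimately show ?thesis by blast
qed

lemma gen_linear: "linear_code (2*n) (generated_code n (2*n) (id_aug n M))"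
  unfolding linear_code_def
proof (intro conjI ballI allI subsetI)
  fix x assume "x \<in> generated_code n (2*n) (id_aug n M)"
  then show "x \<in> vecs (2*n)" using C_iff by blast
next
  show "(\<lambda>i. 0) \<in> generated_code n (2*n) (id_aug n M)"
    unfolding C_iff by (simp add: vecs_def)
next
  fix x y assume "x \<in> generated_code n (2*n) (id_aug n M)" "y \<in> generated_code n (2*n) (id_aug n M)"
  then show "(\<lambda>i. x i + y i) \<in> generated_code n (2*n) (id_aug n M)"
    unfolding C_iff by (simp add: vecs_def distrib_right sum.distrib)
next
  fix r x assume "x \<in> generated_code n (2*n) (id_aug n M)"
  then show "(\<lambda>i. r * x i) \<in> generated_code n (2*n) (id_aug n M)"
    unfolding C_iff by (simp add: vecs_def sum_distrib_left mult.assoc)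
qed

theorem theorem5p2:
  fixes n :: nat and M :: "nat \<Rightarrow> nat \<Rightarrow> zu4"
  assumes "circulant n M"
  shows "formally_self_dual (2 * n) (generated_code n (2 * n) (id_aug n M))"
proof -
  let ?C = "generated_code n (2 * n) (id_aug n M)"
  let ?D = "dual_code (2*n) ?C"
  have img: "phi n ` ?D = ?C"
    using phi_dual[OF assms] phi_surj[OF assms] by blast
  have inj: "inj_on (phi n) ?D"
    by (rule inj_on_subset[OF phi_inj]) (auto simp: dual_code_def)
  have "lee_weight_enum (2*n) ?C w = lee_weight_enum (2*n) ?D w" for w
  proof -
    have "{c \<in> ?C. lee_weight (2*n) c = w} = phi n ` {d \<in> ?D. lee_weight (2*n) d = w}"
    proof
      show "{c \<in> ?C. lee_weight (2*n) c = w} \<subseteq> phi n ` {d \<in> ?D. lee_weight (2*n) d = w}"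
      proof
        fix x assume x: "x \<in> {c \<in> ?C. lee_weight (2*n) c = w}"
        then obtain d where d: "d \<in> ?D" "x = phi n d" using img by blast
        then show "x \<in> phi n ` {d \<in> ?D. lee_weight (2*n) d = w}"
          using x by (auto simp: phi_weight)
      qed
    qed (use img in \<open>auto simp: phi_weight\<close>)
    moreover have "inj_on (phi n) {d \<in> ?D. lee_weight (2*n) d = w}"
      by (rule inj_on_subset[OF inj]) auto
    ultimately show ?thesis unfolding lee_weight_enum_def by (simp add: card_image)
  qed
  then show ?thesis unfolding formally_self_dual_def using gen_linear by blast
qed

end
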